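(* Fix $N\ge 1$ and $\Delta t>0$. Let $\mathbf{b}_n,\mathbf{b}_{n+1}\in\mathbb{C}^N$ with components $b_{j,n},b_{j,n+1}$, with the convention $b_{0,m}=b_{N+1,m}=0$ for $m\in\{n,n+1\}$, and suppose that $\mathbf{b}_{n+1}$ is an exact solution of the system $$b_{j,n+1}=b_{j,n}+\Delta t\Big(-i\,|b|^2_{j,n+1/2}\,b_{j,n+1/2}+2i\,\overline{b_{j,n+1/2}}\,\big[(b^2)_{j+1,n+1/2}+(b^2)_{j-1,n+1/2}\big]\Big),\qquad j=1,\dots,N,$$ where $b_{j,n+1/2}=\tfrac12(b_{j,n}+b_{j,n+1})$, $|b|^2_{j,n+1/2}=\tfrac12(|b_{j,n}|^2+|b_{j,n+1}|^2)$ and $(b^2)_{j,n+1/2}=\tfrac12(b_{j,n}^2+b_{j,n+1}^2)$. Then $\mathcal{H}[\mathbf{b}_{n+1}]=\mathcal{H}[\mathbf{b}_n]$, where $$\mathcal{H}[\mathbf{b}]=\sum_{j=1}^N\Big(\tfrac14|b_j|^4-\operatorname{Re}\big(\bar b_j^{\,2}\,b_{j-1}^2\big)\Big),\qquad b_0=0.$$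
   Context: This is an energy-preserving discretization of the toy model system $-i\dot b_j=-|b_j|^2b_j+2b_{j-1}^2\bar b_j+2b_{j+1}^2\bar b_j$, $j=1,\dots,N$, with $b_0=b_{N+1}=0$, whose Hamiltonian is $\mathcal{H}$. *)

theory Defs
  imports Complex_Main
begin

text \<open>A vector in C^N is represented by a function nat => complex whose
 entries at indices 1..N are the components; ext_bc enforces the
 boundary convention b_0 = b_{N+1} = 0 (and zero outside 1..N).\<close>

definition ext_bc :: "nat \<Rightarrow> (nat \<Rightarrow> complex) \<Rightarrow> nat \<Rightarrow> complex" where
  "ext_bc N b j = (if 1 \<le> j \<and> j \<le> N then b j else 0)"

definition Ham :: "nat \<Rightarrow> (nat \<Rightarrow> complex) \<Rightarrow> real" where
  "Ham N b = (\<Sum>j=1..N. (1/4) * cmod (ext_bc N b j) ^ 4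
      - Re ((cnj (ext_bc N b j))\<^sup>2 * (ext_bc N b (j - 1))\<^sup>2))"

definition scheme_step :: "nat \<Rightarrow> real \<Rightarrow> (nat \<Rightarrow> complex) \<Rightarrow> (nat \<Rightarrow> complex) \<Rightarrow> bool" where
  "scheme_step N dt b b' \<longleftrightarrow>
    (\<forall>j\<in>{1..N}.
      let bm = (\<lambda>k. (ext_bc N b k + ext_bc N b' k) / 2);
          abs2m = (\<lambda>k. (cmod (ext_bc N b k) ^ 2 + cmod (ext_bc N b' k) ^ 2) / 2);
          sqm = (\<lambda>k. ((ext_bc N b k)\<^sup>2 + (ext_bc N b' k)\<^sup>2) / 2)
      in b' j = b j + complex_of_real dt *
           (- \<i> * complex_of_real (abs2m j) * bm j
            + 2 * \<i> * cnj (bm j) * (sqm (j + 1) + sqm (j - 1))))"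

end

theory Submission
  imports Defs
begin

lemma key:
  fixes x y xp yp :: complex
  defines "m \<equiv> (x+y)/2" and "mp \<equiv> (xp+yp)/2" and "sp \<equiv> (xp^2+yp^2)/2" and "s \<equiv> (x^2+y^2)/2"
    and "a \<equiv> (cmod x ^2 + cmod y^2)/2"
  shows "(1/4)*cmod y^4 - Re((cnj y)^2 * yp^2) - ((1/4)*cmod x^4 - Re((cnj x)^2*xp^2))
     = a * Re((y-x)*cnj m) - Re(2*(y-x)*m*cnj sp) - Re(2*cnj s*mp*(yp-xp))"
proof -
  have c4: "\<And>z. cmod z ^4 = (Re z^2 + Im z^2)^2"
    by (metis cmod_power2 power_mult numeral_times_numeral num_double)
  show ?thesis unfolding m_def mp_def sp_def s_def a_def c4 cmod_power2
    by (simp add: power2_eq_square field_simps)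
qed

lemma zero_lemma:
  fixes G :: complex and dt :: real
  shows "Re (complex_of_real dt * (- \<i> * G) * cnj G) = 0"
  by (cases G) (simp add: algebra_simps)

lemma telescope:
  fixes F :: "nat \<Rightarrow> real"
  shows "(\<Sum>j=1..N. F j - F (j - 1)) = F N - F 0"
  by (induction N) (auto simp: sum.atLeast1_atMost_eq)

theorem proposition2p3:
  fixes N :: nat and dt :: real and b b' :: "nat \<Rightarrow> complex"
  assumes "N \<ge> 1" and "dt > 0"
    and "scheme_step N dt b b'"
  shows "Ham N b' = Ham N b"
proof -
  define x where "x = ext_bc N b"
  define y where "y = ext_bc N b'"
  define m where "m k = (x k + y k)/2" for k
  define s where "s k = ((x k)^2 + (y k)^2)/2" for k
  define a where "a k = (cmod (x k) ^2 + cmod (y k)^2)/2" for k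
  define G where "G k = complex_of_real (a k) * m k - 2 * cnj (m k) * (s (k+1) + s (k-1))" for k
  define F where "F k = Re (2 * cnj (s (k+1)) * m k * (y k - x k))" for k
  have step: "y j - x j = complex_of_real dt * (- \<i> * G j)" if j: "j \<in> {1..N}" for j
  proof -
    have "b' j = b j + complex_of_real dt *
           (- \<i> * complex_of_real (a j) * m j + 2 * \<i> * cnj (m j) * (s (j + 1) + s (j - 1)))"
      using assms(3) j unfolding scheme_step_def Let_def a_def m_def s_def x_def y_def by blast
    moreover have "y j = b' j" "x j = b j" using j by (auto simp: x_def y_def ext_bc_def)
    ultimately show ?thesis unfolding G_def by (simp add: algebra_simps)
  qed
  have trm: "((1/4)*cmod (y j)^4 - Re((cnj (y j))^2 * (y (j-1))^2))
      - ((1/4)*cmod (x j)^4 - Re((cnj (x j))^2*(x (j-1))^2)) = F j - F (j-1)"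
    if j: "j \<in> {1..N}" for j
  proof -
    have jj: "j - 1 + 1 = j" using j by auto
    have "((1/4)*cmod (y j)^4 - Re((cnj (y j))^2 * (y (j-1))^2))
      - ((1/4)*cmod (x j)^4 - Re((cnj (x j))^2*(x (j-1))^2))
      = a j * Re((y j - x j)*cnj (m j)) - Re(2*(y j-x j)*m j*cnj (s (j-1)))
         - Re(2*cnj (s j)*m (j-1)*(y (j-1)-x (j-1)))"
      using key[of "y j" "y (j-1)" "x j" "x (j-1)"] unfolding a_def m_def s_def by simp
    also have "\<dots> = Re ((y j - x j) * cnj (G j)) + F j - F (j-1)"
      unfolding G_def F_def jj by (simp add: algebra_simps)
    also have "Re ((y j - x j) * cnj (G j)) = 0"
      using step[OF j] zero_lemma by simp
    finally show ?thesis by simp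
  qed
  have "Ham N b' - Ham N b = (\<Sum>j=1..N. F j - F (j - 1))"
    unfolding Ham_def x_def[symmetric] y_def[symmetric] sum_subtractf[symmetric]
    by (rule sum.cong) (rule refl, rule trm, assumption)
  also have "\<dots> = F N - F 0" by (rule telescope)
  also have "F N = 0" unfolding F_def s_def x_def y_def ext_bc_def by simp
  also have "F 0 = 0" unfolding F_def m_def x_def y_def ext_bc_def by simp
  finally show ?thesis by simp
qed

end
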